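(* Let $(R,\mathfrak{m})$ be a Noetherian local ring, let $f:M\to N$ be a homomorphism of finitely generated $R$-modules, and let $d=1+\mathrm{AR}(\mathfrak{m},\operatorname{im}(f)\subseteq N)$. Then for every $R$-linear map $\epsilon:M\to \mathfrak{m}^dN$, the initial module $(\ker(f+\epsilon))^*$ is a graded subquotient of $(\ker f)^*$, where both initial modules are computed inside $\mathrm{gr}_{\mathfrak{m}}(M)$.
   Context: For a Noetherian ring $R$, an ideal $I$ and finitely generated $R$-modules $N\subseteq M$, the Artin–Rees number $\mathrm{AR}(I,N\subseteq M)$ is the least integer $s$ such that $I^nM\cap N=I^{n-s}(I^sM\cap N)$ for all $n\ge s$. For a finitely generated $R$-module $M$, $\mathrm{gr}_{\mathfrak{m}}(M)=\bigoplus_{i\ge0}\mathfrak{m}^iM/\mathfrak{m}^{i+1}M$, a graded module over $\mathrm{gr}_{\mathfrak{m}}(R)=\bigoplus_{i\ge0}\mathfrak{m}^i/\mathfrak{m}^{i+1}$. For a submodule $L\subseteq M$, the initial module $L^*\subseteq \mathrm{gr}_{\mathfrak{m}}(M)$ is the kernel of the natural graded map $\mathrm{gr}_{\mathfrak{m}}(M)\to\mathrm{gr}_{\mathfrak{m}}(M/L)$; equivalently $L^*=\bigoplus_{i\ge0}(L\cap\mathfrak{m}^iM+\mathfrak{m}^{i+1}M)/\mathfrak{m}^{i+1}M$. "Graded subquotient" means that for every degree $p$, the degree-$p$ component of the first module is (as a $k=R/\mathfrak{m}$-vector space) a subquotient of the degree-$p$ component of the second. *)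

theory Defs
  imports Main "HOL.Modules"
begin

definition ring_ideal :: "'r::comm_ring_1 set \<Rightarrow> bool" where
  "ring_ideal I \<longleftrightarrow> module.subspace (*) I"

definition noetherian_ring :: "'r::comm_ring_1 itself \<Rightarrow> bool" where
  "noetherian_ring _ \<longleftrightarrow>
     (\<forall>I :: 'r set. ring_ideal I \<longrightarrow> (\<exists>S. finite S \<and> module.span (*) S = I))"

definition local_ring :: "'r::comm_ring_1 set \<Rightarrow> bool" where
  "local_ring m \<longleftrightarrow> ring_ideal m \<and> (\<forall>x. x \<notin> m \<longleftrightarrow> x dvd 1)"

definition fin_gen_module :: "('r::comm_ring_1 \<Rightarrow> 'm::ab_group_add \<Rightarrow> 'm) \<Rightarrow> bool" where
  "fin_gen_module s \<longleftrightarrow> (\<exists>S. finite S \<and> module.span s S = UNIV)"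

fun ideal_pow :: "'r::comm_ring_1 set \<Rightarrow> nat \<Rightarrow> 'r set" where
  "ideal_pow I 0 = UNIV"
| "ideal_pow I (Suc k) = module.span (*) {a * b | a b. a \<in> I \<and> b \<in> ideal_pow I k}"

definition ideal_smult :: "('r::comm_ring_1 \<Rightarrow> 'm::ab_group_add \<Rightarrow> 'm) \<Rightarrow> 'r set \<Rightarrow> 'm set \<Rightarrow> 'm set" where
  "ideal_smult s I L = module.span s {s a x | a x. a \<in> I \<and> x \<in> L}"

definition ipow_mod :: "('r::comm_ring_1 \<Rightarrow> 'm::ab_group_add \<Rightarrow> 'm) \<Rightarrow> 'r set \<Rightarrow> nat \<Rightarrow> 'm set \<Rightarrow> 'm set" where
  "ipow_mod s I n L = ideal_smult s (ideal_pow I n) L"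

text \<open>Artin--Rees number AR(I, N' \<subseteq> N), N the whole module type.\<close>
definition AR_number :: "('r::comm_ring_1 \<Rightarrow> 'n::ab_group_add \<Rightarrow> 'n) \<Rightarrow> 'r set \<Rightarrow> 'n set \<Rightarrow> nat" where
  "AR_number s I N' = (LEAST k. \<forall>n\<ge>k.
      ipow_mod s I n UNIV \<inter> N' = ipow_mod s I (n - k) (ipow_mod s I k UNIV \<inter> N'))"

definition set_sum :: "'m::ab_group_add set \<Rightarrow> 'm set \<Rightarrow> 'm set" where
  "set_sum A B = {a + b | a b. a \<in> A \<and> b \<in> B}"

definition coset :: "'m::ab_group_add \<Rightarrow> 'm set \<Rightarrow> 'm set" where
  "coset x Q = {x + q | q. q \<in> Q}"

text \<open>The quotient A/B, as its set of cosets.\<close>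
definition cosets :: "'m::ab_group_add set \<Rightarrow> 'm set \<Rightarrow> 'm set set" where
  "cosets A B = {coset a B | a. a \<in> A}"

text \<open>Module isomorphism C/Q \<cong> A/B (Q \<subseteq> C, B \<subseteq> A submodules of the same module),
 given by an R-linear bijection between the coset sets.\<close>
definition quot_iso :: "('r::comm_ring_1 \<Rightarrow> 'm::ab_group_add \<Rightarrow> 'm) \<Rightarrow> 'm set \<Rightarrow> 'm set \<Rightarrow> 'm set \<Rightarrow> 'm set \<Rightarrow> bool" where
  "quot_iso s C Q A B \<longleftrightarrow> (\<exists>\<phi>. bij_betw \<phi> (cosets C Q) (cosets A B) \<and>
      (\<forall>x\<in>C. \<forall>y\<in>C. \<forall>a b. a \<in> \<phi> (coset x Q) \<longrightarrow> b \<in> \<phi> (coset y Q) \<longrightarrow>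
          a + b \<in> \<phi> (coset (x + y) Q)) \<and>
      (\<forall>x\<in>C. \<forall>r a. a \<in> \<phi> (coset x Q) \<longrightarrow> s r a \<in> \<phi> (coset (s r x) Q)))"

text \<open>Degree-p component of the initial module L^* in gr_m(M), lifted to M:
 L^*_p = initial_comp L p / m^(p+1) M.\<close>
definition initial_comp :: "('r::comm_ring_1 \<Rightarrow> 'm::ab_group_add \<Rightarrow> 'm) \<Rightarrow> 'r set \<Rightarrow> 'm set \<Rightarrow> nat \<Rightarrow> 'm set" where
  "initial_comp s m L p = set_sum (L \<inter> ipow_mod s m p UNIV) (ipow_mod s m (Suc p) UNIV)"

text \<open>L1^* is a graded subquotient of L2^*: for every p, L1^*_p is isomorphic to A/B
 for submodules m^(p+1)M \<subseteq> B \<subseteq> A \<subseteq> initial_comp L2 p, i.e. to a subquotient of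
 L2^*_p (third isomorphism theorem). Since all these modules are annihilated by m,
 R-linear isomorphisms are exactly k-linear isomorphisms.\<close>
definition graded_subquotient :: "('r::comm_ring_1 \<Rightarrow> 'm::ab_group_add \<Rightarrow> 'm) \<Rightarrow> 'r set \<Rightarrow> 'm set \<Rightarrow> 'm set \<Rightarrow> bool" where
  "graded_subquotient s m L1 L2 \<longleftrightarrow> (\<forall>p. \<exists>A B.
      module.subspace s A \<and> module.subspace s B \<and>
      ipow_mod s m (Suc p) UNIV \<subseteq> B \<and> B \<subseteq> A \<and> A \<subseteq> initial_comp s m L2 p \<and>
      quot_iso s (initial_comp s m L1 p) (ipow_mod s m (Suc p) UNIV) A B)"

end

theory Submission
  imports Defs "HOL-Library.Function_Algebras"
begin

inductive_set ospan :: "('a::ab_group_add \<Rightarrow> 'a) set \<Rightarrow> 'a set \<Rightarrow> 'a set"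
  for Ops :: "('a \<Rightarrow> 'a) set" and S :: "'a set" where
  os_base: "x \<in> S \<Longrightarrow> x \<in> ospan Ops S"
| os_zero: "0 \<in> ospan Ops S"
| os_add: "x \<in> ospan Ops S \<Longrightarrow> y \<in> ospan Ops S \<Longrightarrow> x + y \<in> ospan Ops S"
| os_neg: "x \<in> ospan Ops S \<Longrightarrow> - x \<in> ospan Ops S"
| os_op: "g \<in> Ops \<Longrightarrow> x \<in> ospan Ops S \<Longrightarrow> g x \<in> ospan Ops S"

definition osub :: "('a::ab_group_add \<Rightarrow> 'a) set \<Rightarrow> 'a set \<Rightarrow> bool" where
  "osub Ops U \<longleftrightarrow> 0 \<in> U \<and> (\<forall>x\<in>U. \<forall>y\<in>U. x + y \<in> U) \<and> (\<forall>x\<in>U. - x \<in> U)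
     \<and> (\<forall>g\<in>Ops. \<forall>x\<in>U. g x \<in> U)"

definition onoeth :: "('a::ab_group_add \<Rightarrow> 'a) set \<Rightarrow> 'a set \<Rightarrow> bool" where
  "onoeth Ops H \<longleftrightarrow> (\<forall>U. osub Ops U \<and> U \<subseteq> H \<longrightarrow> (\<exists>W. finite W \<and> ospan Ops W = U))"

lemma ospan_osub: "osub Ops (ospan Ops S)"
  unfolding osub_def by (auto intro: ospan.intros)

lemma ospan_least: "S \<subseteq> U \<Longrightarrow> osub Ops U \<Longrightarrow> ospan Ops S \<subseteq> U"
proof
  fix x assume a: "S \<subseteq> U" "osub Ops U" and x: "x \<in> ospan Ops S"
  show "x \<in> U" using x by (induction rule: ospan.induct) (use a in \<open>auto simp: osub_def\<close>)
qed

lemma ospan_mono: "Ops \<subseteq> Ops' \<Longrightarrow> S \<subseteq> S' \<Longrightarrow> ospan Ops S \<subseteq> ospan Ops' S'"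
proof
  fix x assume a: "Ops \<subseteq> Ops'" "S \<subseteq> S'" and x: "x \<in> ospan Ops S"
  show "x \<in> ospan Ops' S'" using x by (induction rule: ospan.induct) (use a in \<open>auto intro: ospan.intros\<close>)
qed

lemma ospan_idem: "osub Ops U \<Longrightarrow> ospan Ops U = U"
  using ospan_least[of U U Ops] os_base[of _ U Ops] by blast

lemma ospan_trans: "Ops \<subseteq> Ops' \<Longrightarrow> ospan Ops' (ospan Ops S) = ospan Ops' S"
  apply (rule antisym)
   apply (rule ospan_least)
    apply (rule ospan_mono, simp, simp)
   apply (rule ospan_osub)
  apply (rule ospan_mono, simp)
  using os_base by blast

lemma osub_0: "osub Ops U \<Longrightarrow> 0 \<in> U" by (simp add: osub_def)
lemma osub_add: "osub Ops U \<Longrightarrow> x \<in> U \<Longrightarrow> y \<in> U \<Longrightarrow> x + y \<in> U" by (simp add: osub_def)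
lemma osub_neg: "osub Ops U \<Longrightarrow> x \<in> U \<Longrightarrow> - x \<in> U" by (simp add: osub_def)
lemma osub_op: "osub Ops U \<Longrightarrow> g \<in> Ops \<Longrightarrow> x \<in> U \<Longrightarrow> g x \<in> U" by (simp add: osub_def)
lemma osub_diff: "osub Ops U \<Longrightarrow> x \<in> U \<Longrightarrow> y \<in> U \<Longrightarrow> x - y \<in> U"
  using osub_add[of Ops U x "- y"] osub_neg[of Ops U y] by simp

locale hilb =
  fixes Ops :: "('a::ab_group_add \<Rightarrow> 'a) set" and T :: "'a \<Rightarrow> 'a" and H :: "'a set"
  assumes opadd: "\<And>g x y. g \<in> Ops \<Longrightarrow> g (x + y) = g x + g y"
    and Tadd: "\<And>x y. T (x + y) = T x + T y"
    and comm: "\<And>g x. g \<in> Ops \<Longrightarrow> g (T x) = T (g x)"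
    and Hsub: "osub Ops H"
begin

lemma T0: "T 0 = 0" using Tadd[of 0 0] by simp
lemma Tneg: "T (- x) = - T x" using Tadd[of "- x" x] T0 by (simp add: eq_neg_iff_add_eq_0)
lemma g0: "g \<in> Ops \<Longrightarrow> g 0 = 0" using opadd[of g 0 0] by simp
lemma gneg: "g \<in> Ops \<Longrightarrow> g (- x) = - g x" using opadd[of g "- x" x] g0[of g] by (simp add: eq_neg_iff_add_eq_0)

lemma Tpow_add: "(T^^k) (x + y) = (T^^k) x + (T^^k) y"
  by (induction k) (auto simp: Tadd)
lemma Tpow0: "(T^^k) 0 = 0"
  by (induction k) (auto simp: T0)
lemma Tpow_neg: "(T^^k) (- x) = - (T^^k) x"
  by (induction k) (auto simp: Tneg)
lemma comm_pow: "g \<in> Ops \<Longrightarrow> g ((T^^k) x) = (T^^k) (g x)"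
  by (induction k) (auto simp: comm)

fun Pd :: "nat \<Rightarrow> 'a set" where
  "Pd 0 = {0}"
| "Pd (Suc d) = {c + T p | c p. c \<in> H \<and> p \<in> Pd d}"

lemma PdI: "c \<in> H \<Longrightarrow> p \<in> Pd d \<Longrightarrow> c + T p \<in> Pd (Suc d)" by auto
lemma PdE: "x \<in> Pd (Suc d) \<Longrightarrow> (\<And>c p. x = c + T p \<Longrightarrow> c \<in> H \<Longrightarrow> p \<in> Pd d \<Longrightarrow> P) \<Longrightarrow> P" by auto
declare Pd.simps(2)[simp del]

lemma Pd_osub: "osub Ops (Pd d)"
proof (induction d)
  case 0
  then show ?case by (auto simp: osub_def g0)
next
  case (Suc d)
  show ?case unfolding osub_def
  proof (intro conjI ballI)
    have "0 + T 0 \<in> Pd (Suc d)" using osub_0[OF Hsub] osub_0[OF Suc] by (rule PdI)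
    then show "0 \<in> Pd (Suc d)" using T0 by simp
  next
    fix x y assume "x \<in> Pd (Suc d)" "y \<in> Pd (Suc d)"
    then obtain c1 p1 c2 p2 where e: "x = c1 + T p1" "y = c2 + T p2" and m: "c1 \<in> H" "c2 \<in> H"
      "p1 \<in> Pd d" "p2 \<in> Pd d" by (metis PdE)
    have "(c1 + c2) + T (p1 + p2) \<in> Pd (Suc d)"
      using osub_add[OF Hsub m(1,2)] osub_add[OF Suc m(3,4)] by (rule PdI)
    then show "x + y \<in> Pd (Suc d)" using e Tadd[of p1 p2] by (simp add: algebra_simps)
  next
    fix x assume "x \<in> Pd (Suc d)"
    then obtain c p where e: "x = c + T p" and m: "c \<in> H" "p \<in> Pd d" by (metis PdE)
    have "(- c) + T (- p) \<in> Pd (Suc d)"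
      using osub_neg[OF Hsub m(1)] osub_neg[OF Suc m(2)] by (rule PdI)
    then show "- x \<in> Pd (Suc d)" using e Tneg[of p] by (simp add: algebra_simps)
  next
    fix g x assume g: "g \<in> Ops" and "x \<in> Pd (Suc d)"
    then obtain c p where e: "x = c + T p" and m: "c \<in> H" "p \<in> Pd d" by (metis PdE)
    have "g c + T (g p) \<in> Pd (Suc d)"
      using osub_op[OF Hsub g m(1)] osub_op[OF Suc g m(2)] by (rule PdI)
    then show "g x \<in> Pd (Suc d)" using e opadd[OF g] comm[OF g] by simp
  qed
qed

lemma Pd_T: "p \<in> Pd d \<Longrightarrow> T p \<in> Pd (Suc d)"
  using PdI[OF osub_0[OF Hsub], of p d] by simp

lemma Pd_Suc: "Pd d \<subseteq> Pd (Suc d)"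
proof (induction d)
  case 0
  then show ?case using PdI[OF osub_0[OF Hsub], of 0 0] T0 by simp
next
  case (Suc d)
  show ?case
  proof
    fix x assume "x \<in> Pd (Suc d)"
    then obtain c p where "x = c + T p" "c \<in> H" "p \<in> Pd d" by (metis PdE)
    then show "x \<in> Pd (Suc (Suc d))" using Suc PdI by blast
  qed
qed

lemma Pd_mono: "d \<le> e \<Longrightarrow> Pd d \<subseteq> Pd e"
  by (rule lift_Suc_mono_le[of Pd]) (use Pd_Suc in auto)

lemma Pd_Tpow: "p \<in> Pd d \<Longrightarrow> (T^^k) p \<in> Pd (d + k)"
  by (induction k) (simp_all add: Pd_T)

lemma Pd_lead: "Pd (Suc d) = {(T^^d) c + p | c p. c \<in> H \<and> p \<in> Pd d}"
proof (induction d)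
  case 0
  then show ?case using T0 by (auto simp: Pd.simps)
next
  case (Suc d)
  have "Pd (Suc (Suc d)) = {c0 + T q | c0 q. c0 \<in> H \<and> q \<in> Pd (Suc d)}" by (simp add: Pd.simps)
  also have "\<dots> = {c0 + T ((T^^d) c + p) | c0 c p. c0 \<in> H \<and> c \<in> H \<and> p \<in> Pd d}"
    unfolding Suc by blast
  also have "\<dots> = {(T^^(Suc d)) c + (c0 + T p) | c0 c p. c0 \<in> H \<and> c \<in> H \<and> p \<in> Pd d}"
    by (simp add: Tadd algebra_simps)
  also have "\<dots> = {(T^^(Suc d)) c + p | c p. c \<in> H \<and> p \<in> Pd (Suc d)}"
    by (auto simp: Pd.simps)
  finally show ?case .
qed

lemma Pd_span: "Pd d \<subseteq> ospan (insert T Ops) H"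
proof (induction d)
  case 0
  then show ?case by (auto intro: os_zero)
next
  case (Suc d)
  show ?case
  proof
    fix x assume "x \<in> Pd (Suc d)"
    then obtain c p where "x = c + T p" "c \<in> H" "p \<in> Pd d" by (metis PdE)
    then show "x \<in> ospan (insert T Ops) H" using Suc
      by (metis os_add os_base os_op insertI1 subsetD)
  qed
qed

lemma span_Pd: "ospan (insert T Ops) H = (\<Union>d. Pd d)"
proof
  show "(\<Union>d. Pd d) \<subseteq> ospan (insert T Ops) H" using Pd_span by auto
  show "ospan (insert T Ops) H \<subseteq> (\<Union>d. Pd d)"
  proof
    fix x assume "x \<in> ospan (insert T Ops) H"
    then show "x \<in> (\<Union>d. Pd d)"
    proof (induction rule: ospan.induct)
      case (os_base x)
      then have "x + T 0 \<in> Pd 1" using PdI[of x 0 0] by simp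
      then show ?case using T0 by auto
    next
      case os_zero
      have "0 \<in> Pd 0" by simp
      then show ?case by blast
    next
      case (os_add x y)
      then obtain d1 d2 where "x \<in> Pd d1" "y \<in> Pd d2" by auto
      then have "x \<in> Pd (d1 + d2)" "y \<in> Pd (d1 + d2)" using Pd_mono[of d1 "d1+d2"] Pd_mono[of d2 "d1+d2"] by auto
      then show ?case using osub_add[OF Pd_osub] by blast
    next
      case (os_neg x)
      then show ?case using osub_neg[OF Pd_osub] by blast
    next
      case (os_op g x)
      then obtain d where d: "x \<in> Pd d" by auto
      show ?case
      proof (cases "g = T")
        case True
        then show ?thesis using Pd_T[OF d] by blast
      next
        case False
        then have "g \<in> Ops" using os_op by auto
        then show ?thesis using osub_op[OF Pd_osub _ d] by blast
      qed
    qed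
  qed
qed

lemma span_Tpow: "x \<in> ospan (insert T Ops) W \<Longrightarrow> (T^^k) x \<in> ospan (insert T Ops) W"
  by (induction k) (auto intro: os_op)

theorem hilbert:
  assumes noeth: "onoeth Ops H"
  shows "onoeth (insert T Ops) (ospan (insert T Ops) H)"
  unfolding onoeth_def
proof (intro allI impI, elim conjE)
  fix U assume Usub: "osub (insert T Ops) U" and UX: "U \<subseteq> ospan (insert T Ops) H"
  define L where "L d = {c \<in> H. \<exists>p \<in> Pd d. (T^^d) c + p \<in> U}" for d
  have LH: "L d \<subseteq> H" for d unfolding L_def by auto
  have Losub: "osub Ops (L d)" for d
    unfolding osub_def
  proof (intro conjI ballI)
    show "0 \<in> L d" unfolding L_def using osub_0[OF Hsub] osub_0[OF Pd_osub] osub_0[OF Usub] Tpow0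
      by force
  next
    fix x y assume "x \<in> L d" "y \<in> L d"
    then obtain p q where "x \<in> H" "y \<in> H" "p \<in> Pd d" "q \<in> Pd d" "(T^^d) x + p \<in> U" "(T^^d) y + q \<in> U"
      unfolding L_def by auto
    moreover have "(T^^d) (x + y) + (p + q) = ((T^^d) x + p) + ((T^^d) y + q)"
      by (simp add: Tpow_add algebra_simps)
    ultimately show "x + y \<in> L d" unfolding L_def
      using osub_add[OF Hsub, of x y] osub_add[OF Pd_osub, of p d q] osub_add[OF Usub, of "(T^^d) x + p" "(T^^d) y + q"]
      by (intro CollectI conjI bexI[of _ "p + q"]) (simp_all add: algebra_simps)
  next
    fix x assume "x \<in> L d"
    then obtain p where "x \<in> H" "p \<in> Pd d" "(T^^d) x + p \<in> U"
      unfolding L_def by auto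
    moreover have "(T^^d) (- x) + (- p) = - ((T^^d) x + p)"
      by (simp add: Tpow_neg algebra_simps)
    ultimately show "- x \<in> L d" unfolding L_def
      using osub_neg[OF Hsub, of x] osub_neg[OF Pd_osub, of p d] osub_neg[OF Usub, of "(T^^d) x + p"]
      by (intro CollectI conjI bexI[of _ "- p"]) simp_all
  next
    fix g x assume g: "g \<in> Ops" and "x \<in> L d"
    then obtain p where "x \<in> H" "p \<in> Pd d" "(T^^d) x + p \<in> U"
      unfolding L_def by auto
    moreover have "(T^^d) (g x) + g p = g ((T^^d) x + p)"
      by (simp add: opadd[OF g] comm_pow[OF g])
    moreover have "g \<in> insert T Ops" using g by simp
    ultimately show "g x \<in> L d" unfolding L_def
      using osub_op[OF Hsub g, of x] osub_op[OF Pd_osub g, of p d] osub_op[OF Usub, of g "(T^^d) x + p"]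
      by (intro CollectI conjI bexI[of _ "g p"]) simp_all
  qed
  have LSuc: "L d \<subseteq> L (Suc d)" for d
  proof
    fix x assume "x \<in> L d"
    then obtain p where "x \<in> H" "p \<in> Pd d" "(T^^d) x + p \<in> U"
      unfolding L_def by auto
    moreover have "T ((T^^d) x + p) = (T^^(Suc d)) x + T p" by (simp add: Tadd)
    ultimately show "x \<in> L (Suc d)" unfolding L_def
      using Pd_T[of p d] osub_op[OF Usub, of T "(T^^d) x + p"]
      by (intro CollectI conjI bexI[of _ "T p"]) simp_all
  qed
  have Lmono: "d \<le> e \<Longrightarrow> L d \<subseteq> L e" for d e
    by (rule lift_Suc_mono_le[of L]) (use LSuc in auto)
  define LL where "LL = (\<Union>d. L d)"
  have LLsub: "osub Ops LL" unfolding osub_def LL_def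
  proof (intro conjI ballI)
    show "0 \<in> (\<Union>d. L d)" using osub_0[OF Losub] by blast
  next
    fix x y assume "x \<in> (\<Union>d. L d)" "y \<in> (\<Union>d. L d)"
    then obtain d1 d2 where "x \<in> L d1" "y \<in> L d2" by auto
    then have "x \<in> L (d1 + d2)" "y \<in> L (d1 + d2)" using Lmono[of d1 "d1+d2"] Lmono[of d2 "d1+d2"] by auto
    then show "x + y \<in> (\<Union>d. L d)" using osub_add[OF Losub] by blast
  next
    fix x assume "x \<in> (\<Union>d. L d)"
    then show "- x \<in> (\<Union>d. L d)" using osub_neg[OF Losub] by blast
  next
    fix g x assume "g \<in> Ops" "x \<in> (\<Union>d. L d)"
    then show "g x \<in> (\<Union>d. L d)" using osub_op[OF Losub] by blast
  qed
  have "LL \<subseteq> H" using LH unfolding LL_def by auto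
  then obtain C where C: "finite C" "ospan Ops C = LL" using noeth LLsub unfolding onoeth_def by blast
  have "\<forall>c\<in>C. \<exists>d. c \<in> L d" using C(2) os_base[of _ C Ops] unfolding LL_def by blast
  then obtain dd where dd: "\<And>c. c \<in> C \<Longrightarrow> c \<in> L (dd c)" by metis
  define D where "D = (\<Sum>c\<in>C. dd c)"
  have "C \<subseteq> L D"
  proof
    fix c assume c: "c \<in> C"
    have "dd c \<le> D" unfolding D_def using C(1) c by (simp add: member_le_sum)
    then show "c \<in> L D" using dd[OF c] Lmono by blast
  qed
  then have "LL \<subseteq> L D" using ospan_least[OF _ Losub] C(2) by blast
  then have LD: "D \<le> d \<Longrightarrow> L d = L D" for d using Lmono[of D d] unfolding LL_def by blast
  have "\<forall>d. \<exists>G. finite G \<and> ospan Ops G = L d" using noeth Losub LH unfolding onoeth_def by blast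
  then obtain G where G: "\<And>d. finite (G d)" "\<And>d. ospan Ops (G d) = L d" by metis
  have "\<forall>d c. \<exists>w. c \<in> L d \<longrightarrow> w \<in> U \<and> (\<exists>p\<in>Pd d. w = (T^^d) c + p)"
    unfolding L_def by blast
  then obtain wit where wit: "\<And>d c. c \<in> L d \<Longrightarrow> wit d c \<in> U \<and> (\<exists>p\<in>Pd d. wit d c = (T^^d) c + p)"
    by metis
  define W where "W = (\<Union>d\<le>D. wit d ` G d)"
  have Wfin: "finite W" unfolding W_def using G(1) by auto
  have GL: "G d \<subseteq> L d" for d using G(2)[of d] os_base[of _ "G d" Ops] by blast
  have WU: "W \<subseteq> U"
  proof
    fix w assume "w \<in> W"
    then obtain d c where "c \<in> G d" "w = wit d c" unfolding W_def by blast
    then show "w \<in> U" using wit[of c d] GL[of d] by blast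
  qed
  have spanWU: "ospan (insert T Ops) W \<subseteq> U" using ospan_least[OF WU Usub] .
  have key: "\<forall>u. u \<in> U \<and> u \<in> Pd d \<longrightarrow> u \<in> ospan (insert T Ops) W" for d
  proof (induction d)
    case 0
    show ?case by (simp add: os_zero)
  next
    case (Suc d)
    show ?case
    proof (intro allI impI, elim conjE)
      fix u assume uU: "u \<in> U" and uP: "u \<in> Pd (Suc d)"
      have "u \<in> {(T^^d) c + p | c p. c \<in> H \<and> p \<in> Pd d}" using uP by (simp only: Pd_lead)
      then obtain c p where cp: "u = (T^^d) c + p" "c \<in> H" "p \<in> Pd d" by blast
      have cL: "c \<in> L d" unfolding L_def using cp uU by blast
      define d' where "d' = min d D"
      have d'le: "d' \<le> d" "d' \<le> D" unfolding d'_def by auto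
      have "L d = L d'"
      proof (cases "D \<le> d")
        case True
        then show ?thesis using LD[OF True] unfolding d'_def by simp
      next
        case False
        then show ?thesis unfolding d'_def by simp
      qed
      then have cG: "c \<in> ospan Ops (G d')" using cL G(2) by simp
      have sub: "\<exists>v\<in>ospan (insert T Ops) W. \<exists>q\<in>Pd d. v = (T^^d) c' + q"
        if "c' \<in> ospan Ops (G d')" for c'
        using that
      proof (induction rule: ospan.induct)
        case (os_base x)
        then have xL: "x \<in> L d'" using GL by blast
        have wW: "wit d' x \<in> W" unfolding W_def using os_base d'le by blast
        obtain p0 where p0: "p0 \<in> Pd d'" "wit d' x = (T^^d') x + p0" using wit[OF xL] by blast
        let ?v = "(T^^(d - d')) (wit d' x)"
        have v1: "?v \<in> ospan (insert T Ops) W" using span_Tpow ospan.os_base[OF wW] by blast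
        have "(T^^(d - d' + d')) x = (T^^(d - d')) ((T^^d') x)" by (simp add: funpow_add)
        then have "(T^^(d - d')) ((T^^d') x) = (T^^d) x" using d'le by simp
        moreover have "?v = (T^^(d - d')) ((T^^d') x) + (T^^(d - d')) p0"
          using p0(2) by (simp add: Tpow_add)
        ultimately have "?v = (T^^d) x + (T^^(d - d')) p0" by simp
        moreover have "(T^^(d - d')) p0 \<in> Pd d" using Pd_Tpow[OF p0(1), of "d - d'"] d'le by simp
        ultimately show ?case using v1 by blast
      next
        case os_zero
        show ?case using ospan.os_zero[of "insert T Ops" W] osub_0[OF Pd_osub, of d] Tpow0 by force
      next
        case (os_add x y)
        then obtain v1 q1 v2 q2 where "v1 \<in> ospan (insert T Ops) W" "q1 \<in> Pd d" "v1 = (T^^d) x + q1"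
          "v2 \<in> ospan (insert T Ops) W" "q2 \<in> Pd d" "v2 = (T^^d) y + q2" by blast
        moreover have "v1 + v2 = (T^^d) (x + y) + (q1 + q2)" using \<open>v1 = _\<close> \<open>v2 = _\<close>
          by (simp add: Tpow_add algebra_simps)
        moreover have "v1 + v2 \<in> ospan (insert T Ops) W" using \<open>v1 \<in> _\<close> \<open>v2 \<in> _\<close> by (rule ospan.os_add)
        ultimately show ?case using osub_add[OF Pd_osub, of q1 d q2] by blast
      next
        case (os_neg x)
        then obtain v1 q1 where "v1 \<in> ospan (insert T Ops) W" "q1 \<in> Pd d" "v1 = (T^^d) x + q1" by blast
        moreover have "- v1 = (T^^d) (- x) + (- q1)" using \<open>v1 = _\<close>
          by (simp add: Tpow_neg algebra_simps)
        moreover have "- v1 \<in> ospan (insert T Ops) W" using \<open>v1 \<in> _\<close> by (rule ospan.os_neg)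
        ultimately show ?case using osub_neg[OF Pd_osub, of q1 d] by blast
      next
        case (os_op g x)
        then obtain v1 q1 where "v1 \<in> ospan (insert T Ops) W" "q1 \<in> Pd d" "v1 = (T^^d) x + q1" by blast
        moreover have "g v1 = (T^^d) (g x) + g q1" using \<open>v1 = _\<close> os_op(1) by (simp add: opadd comm_pow)
        moreover have "g v1 \<in> ospan (insert T Ops) W" using \<open>v1 \<in> _\<close> os_op(1) by (simp add: ospan.os_op)
        ultimately show ?case using osub_op[OF Pd_osub os_op(1), of q1 d] by blast
      qed
      obtain v q where vq: "v \<in> ospan (insert T Ops) W" "q \<in> Pd d" "v = (T^^d) c + q"
        using sub[OF cG] by blast
      have "u - v = p - q" using cp vq by simp
      moreover have "u - v \<in> U" using osub_diff[OF Usub uU] vq spanWU by blast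
      moreover have "p - q \<in> Pd d" using osub_diff[OF Pd_osub cp(3) vq(2)] .
      ultimately have "u - v \<in> ospan (insert T Ops) W" using Suc by auto
      then have "(u - v) + v \<in> ospan (insert T Ops) W" using vq(1) by (rule os_add)
      then show "u \<in> ospan (insert T Ops) W" by simp
    qed
  qed
  have "U \<subseteq> ospan (insert T Ops) W"
  proof
    fix u assume "u \<in> U"
    moreover then obtain d where "u \<in> Pd d" using UX span_Pd by blast
    ultimately show "u \<in> ospan (insert T Ops) W" using key by blast
  qed
  then show "\<exists>W. finite W \<and> ospan (insert T Ops) W = U" using Wfin spanWU by blast
qed

end



lemma mult_module: "module ((*) :: 'a::comm_ring_1 \<Rightarrow> 'a \<Rightarrow> 'a)"
  by unfold_locales (simp_all add: algebra_simps)

lemma osub_subspace: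
  assumes "module s"
  shows "osub (range s) U \<longleftrightarrow> module.subspace s U"
proof -
  interpret module s by fact
  have n: "- x = s (- 1) x" for x by (simp add: scale_minus_left)
  show ?thesis
  proof
    assume a: "osub (range s) U"
    show "subspace U" unfolding subspace_def
    proof (intro conjI ballI allI)
      show "0 \<in> U" using osub_0[OF a] .
      show "x + y \<in> U" if "x \<in> U" "y \<in> U" for x y using osub_add[OF a that] .
      show "s c x \<in> U" if "x \<in> U" for c x using osub_op[OF a _ that, of "s c"] by simp
    qed
  next
    assume a: "subspace U"
    show "osub (range s) U" unfolding osub_def
    proof (intro conjI ballI)
      show "0 \<in> U" using subspace_0[OF a] .
      show "x + y \<in> U" if "x \<in> U" "y \<in> U" for x y using subspace_add[OF a that] .
      show "- x \<in> U" if "x \<in> U" for x using subspace_neg[OF a that] .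
      show "g x \<in> U" if "g \<in> range s" "x \<in> U" for g x using subspace_scale[OF a \<open>x \<in> U\<close>] that(1) by auto
    qed
  qed
qed

lemma span_ospan:
  assumes "module s"
  shows "module.span s S = ospan (range s) S"
proof -
  interpret module s by fact
  have "osub (range s) (ospan (range s) S)" by (rule ospan_osub)
  then have sub: "subspace (ospan (range s) S)" using osub_subspace[OF assms] by simp
  show ?thesis
  proof (rule antisym)
    show "span S \<subseteq> ospan (range s) S"
      by (rule span_minimal[OF _ sub]) (auto intro: os_base)
    show "ospan (range s) S \<subseteq> span S"
      by (rule ospan_least) (auto simp: osub_subspace[OF assms] intro: span_base)
  qed
qed

lemma noeth_R:
  assumes "noetherian_ring TYPE('r::comm_ring_1)"
  shows "onoeth (range ((*) :: 'r \<Rightarrow> 'r \<Rightarrow> 'r)) UNIV"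
  unfolding onoeth_def
proof (intro allI impI, elim conjE)
  fix U :: "'r set" assume "osub (range (*)) U"
  then have "ring_ideal U" unfolding ring_ideal_def using osub_subspace[OF mult_module] by blast
  then obtain S where "finite S" "module.span (*) S = U"
    using assms unfolding noetherian_ring_def by blast
  moreover have "ospan (range (*)) S = U" using span_ospan[OF mult_module, of S] \<open>module.span (*) S = U\<close> by simp
  ultimately show "\<exists>W. finite W \<and> ospan (range (*)) W = U" by blast
qed

lemma noeth_step:
  assumes ms: "module s" and R: "onoeth (range ((*) :: 'r::comm_ring_1 \<Rightarrow> 'r \<Rightarrow> 'r)) UNIV"
    and H1s: "osub (range s) H1" and H1n: "onoeth (range s) H1"
  shows "onoeth (range (s :: 'r \<Rightarrow> 'm::ab_group_add \<Rightarrow> 'm)) {h + s r e | h r. h \<in> H1}"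
  unfolding onoeth_def
proof (intro allI impI, elim conjE)
  interpret module s by fact
  fix U assume Us: "osub (range s) U" and UH: "U \<subseteq> {h + s r e | h r. h \<in> H1}"
  define J where "J = {c. \<exists>u\<in>U. \<exists>h\<in>H1. u = h + s c e}"
  have Js: "osub (range (*)) J" unfolding osub_def
  proof (intro conjI ballI)
    show "0 \<in> J" unfolding J_def using osub_0[OF Us] osub_0[OF H1s] by force
  next
    fix x y assume "x \<in> J" "y \<in> J"
    then obtain u1 h1 u2 h2 where "u1 \<in> U" "h1 \<in> H1" "u1 = h1 + s x e" "u2 \<in> U" "h2 \<in> H1" "u2 = h2 + s y e"
      unfolding J_def by blast
    then show "x + y \<in> J" unfolding J_def using osub_add[OF Us, of u1 u2] osub_add[OF H1s, of h1 h2]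
      by (intro CollectI bexI[of _ "u1 + u2"] bexI[of _ "h1 + h2"]) (simp_all add: algebra_simps)
  next
    fix x assume "x \<in> J"
    then obtain u1 h1 where "u1 \<in> U" "h1 \<in> H1" "u1 = h1 + s x e"
      unfolding J_def by blast
    then show "- x \<in> J" unfolding J_def using osub_neg[OF Us, of u1] osub_neg[OF H1s, of h1]
      by (intro CollectI bexI[of _ "- u1"] bexI[of _ "- h1"]) (simp_all add: algebra_simps)
  next
    fix g :: "'r \<Rightarrow> 'r" and x :: 'r assume "g \<in> range (*)" "x \<in> J"
    then obtain r where g: "g = (*) r" by blast
    from \<open>x \<in> J\<close> obtain u1 h1 where "u1 \<in> U" "h1 \<in> H1" "u1 = h1 + s x e"
      unfolding J_def by blast
    then show "g x \<in> J" unfolding J_def g using osub_op[OF Us, of "s r" u1] osub_op[OF H1s, of "s r" h1]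
      by (intro CollectI bexI[of _ "s r u1"] bexI[of _ "s r h1"]) (simp_all add: algebra_simps)
  qed
  obtain C where C: "finite C" "ospan (range (*)) C = J" using R Js unfolding onoeth_def by blast
  have "\<forall>c. \<exists>u. c \<in> J \<longrightarrow> u \<in> U \<and> (\<exists>h\<in>H1. u = h + s c e)" unfolding J_def by blast
  then obtain uc where uc: "\<And>c. c \<in> J \<Longrightarrow> uc c \<in> U \<and> (\<exists>h\<in>H1. uc c = h + s c e)" by metis
  have UH1s: "osub (range s) (U \<inter> H1)" unfolding osub_def
    using osub_0[OF Us] osub_0[OF H1s] osub_add[OF Us] osub_add[OF H1s] osub_neg[OF Us] osub_neg[OF H1s]
      osub_op[OF Us] osub_op[OF H1s] by simp
  obtain W1 where W1: "finite W1" "ospan (range s) W1 = U \<inter> H1" using H1n UH1s unfolding onoeth_def by blast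
  define W where "W = W1 \<union> uc ` C"
  have CJ: "C \<subseteq> J" using C(2) os_base[of _ C] by blast
  have Wfin: "finite W" unfolding W_def using W1 C by simp
  have WU: "W \<subseteq> U"
  proof
    fix w assume "w \<in> W"
    then consider "w \<in> W1" | c where "c \<in> C" "w = uc c" unfolding W_def by blast
    then show "w \<in> U"
    proof cases
      case 1
      then show ?thesis using W1(2) ospan.os_base[of w W1 "range s"] by blast
    next
      case 2
      then show ?thesis using uc[of c] CJ by blast
    qed
  qed
  have spanWU: "ospan (range s) W \<subseteq> U" by (rule ospan_least[OF WU Us])
  have sub: "\<exists>v\<in>ospan (range s) W. \<exists>h\<in>H1. v = h + s c' e" if "c' \<in> ospan (range (*)) C" for c'
    using that
  proof (induction rule: ospan.induct)
    case (os_base x)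
    then have "uc x \<in> W" unfolding W_def by blast
    then have a: "uc x \<in> ospan (range s) W" by (rule ospan.os_base)
    have "x \<in> J" using os_base CJ by blast
    then obtain h where "h \<in> H1" "uc x = h + s x e" using uc[of x] by blast
    then show ?case using a by blast
  next
    case os_zero
    have "(0::'m) = 0 + s 0 e" by simp
    then show ?case using osub_0[OF H1s] ospan.os_zero[of "range s" W] by blast
  next
    case (os_add x y)
    then obtain v1 h1 v2 h2 where a: "v1 \<in> ospan (range s) W" "h1 \<in> H1" "v1 = h1 + s x e"
      "v2 \<in> ospan (range s) W" "h2 \<in> H1" "v2 = h2 + s y e" by blast
    have "v1 + v2 = (h1 + h2) + s (x + y) e" using a(3,6) by (simp add: scale_left_distrib algebra_simps)
    moreover have "v1 + v2 \<in> ospan (range s) W" using a(1,4) by (rule ospan.os_add)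
    ultimately show ?case using osub_add[OF H1s a(2,5)] by blast
  next
    case (os_neg x)
    then obtain v1 h1 where a: "v1 \<in> ospan (range s) W" "h1 \<in> H1" "v1 = h1 + s x e" by blast
    have "- v1 = (- h1) + s (- x) e" using a(3) by simp
    moreover have "- v1 \<in> ospan (range s) W" using a(1) by (rule ospan.os_neg)
    ultimately show ?case using osub_neg[OF H1s a(2)] by blast
  next
    case (os_op g x)
    from os_op(1) obtain r where g: "g = (*) r" by (rule rangeE)
    from os_op(3) obtain v1 h1 where a: "v1 \<in> ospan (range s) W" "h1 \<in> H1" "v1 = h1 + s x e" by blast
    have e1: "s r v1 = s r h1 + s (r * x) e" unfolding a(3) by (simp only: scale_right_distrib scale_scale)
    have "g x = r * x" unfolding g by simp
    with e1 have "s r v1 = s r h1 + s (g x) e" by simp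
    moreover have "s r v1 \<in> ospan (range s) W" by (rule ospan.os_op[OF rangeI a(1)])
    moreover have "s r h1 \<in> H1" using osub_op[OF H1s _ a(2), of "s r"] by simp
    ultimately show ?case by blast
  qed
  have "U \<subseteq> ospan (range s) W"
  proof
    fix u assume uU: "u \<in> U"
    have "u \<in> {h + s r e | h r. h \<in> H1}" using UH uU by (rule subsetD)
    then obtain h c where hc: "h \<in> H1" "u = h + s c e" by blast
    have "c \<in> J" unfolding J_def using uU hc by blast
    then have "c \<in> ospan (range (*)) C" using C(2) by simp
    from sub[OF this] obtain v h' where v: "v \<in> ospan (range s) W" "h' \<in> H1" "v = h' + s c e" by blast
    have "u - v = h - h'" unfolding hc(2) v(3) by simp
    moreover have "u - v \<in> U" using osub_diff[OF Us uU, of v] spanWU v(1) by blast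
    ultimately have "u - v \<in> U \<inter> H1" using osub_diff[OF H1s hc(1) v(2)] by simp
    moreover have "ospan (range s) W1 \<subseteq> ospan (range s) W" by (rule ospan_mono) (auto simp: W_def)
    ultimately have "u - v \<in> ospan (range s) W" using W1(2) by blast
    from ospan.os_add[OF this v(1)] show "u \<in> ospan (range s) W" by simp
  qed
  then show "\<exists>W. finite W \<and> ospan (range s) W = U" using Wfin spanWU by blast
qed

lemma noeth_span:
  assumes ms: "module s" and R: "onoeth (range ((*) :: 'r::comm_ring_1 \<Rightarrow> 'r \<Rightarrow> 'r)) UNIV"
    and fin: "finite S"
  shows "onoeth (range (s :: 'r \<Rightarrow> 'm::ab_group_add \<Rightarrow> 'm)) (module.span s S)"
  using fin
proof (induction S rule: finite_induct)
  case empty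
  interpret module s by fact
  show ?case unfolding onoeth_def
  proof (intro allI impI, elim conjE)
    fix U assume "osub (range s) U" "U \<subseteq> span {}"
    then have "U = {0}" using osub_0 by fastforce
    moreover have "ospan (range s) {} = {0}" using span_ospan[OF ms, of "{}"] by simp
    ultimately show "\<exists>W. finite W \<and> ospan (range s) W = U" by blast
  qed
next
  case (insert e S)
  interpret module s by fact
  have "span (insert e S) = {h + s r e | h r. h \<in> span S}"
  proof (rule set_eqI, rule iffI)
    fix x assume "x \<in> span (insert e S)"
    then obtain k where "x - s k e \<in> span S" unfolding span_insert by blast
    then show "x \<in> {h + s r e | h r. h \<in> span S}" by (intro CollectI exI[of _ "x - s k e"] exI[of _ k]) simp
  next
    fix x assume "x \<in> {h + s r e | h r. h \<in> span S}"
    then obtain h r where "h \<in> span S" "x = h + s r e" by blast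
    then show "x \<in> span (insert e S)" unfolding span_insert by (intro CollectI exI[of _ r]) simp
  qed
  moreover have "osub (range s) (span S)" using osub_subspace[OF ms] by simp
  ultimately show ?case using noeth_step[OF ms R _ insert.IH] by simp
qed

lemma noeth_N:
  assumes "module s" "noetherian_ring TYPE('r::comm_ring_1)" "fin_gen_module (s :: 'r \<Rightarrow> 'm::ab_group_add \<Rightarrow> 'm)"
  shows "onoeth (range s) UNIV"
  using assms noeth_span[OF assms(1) noeth_R[OF assms(2)]] unfolding fin_gen_module_def by metis



lemma ipow_subspace: "module s \<Longrightarrow> module.subspace s (ipow_mod s I n L)"
  unfolding ipow_mod_def ideal_smult_def by (simp add: module.subspace_span)

lemma ipow0: assumes "module s" "x \<in> L" shows "x \<in> ipow_mod s I 0 L"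
proof -
  interpret module s by fact
  have "x \<in> {s a x | a x. a \<in> ideal_pow I 0 \<and> x \<in> L}"
    by (rule CollectI, rule exI[of _ 1], rule exI[of _ x]) (simp add: assms(2))
  then show ?thesis unfolding ipow_mod_def ideal_smult_def by (simp add: span_base)
qed

lemma pow_step:
  assumes ms: "module s" and a: "a \<in> I" and z: "z \<in> ipow_mod s I n L"
  shows "s a z \<in> ipow_mod s I (Suc n) L"
proof -
  interpret module s by fact
  let ?T = "ipow_mod s I (Suc n) L"
  have Tsub: "subspace ?T" using ipow_subspace[OF ms] .
  have "subspace {z. s a z \<in> ?T}" unfolding subspace_def
  proof (intro conjI ballI allI)
    show "0 \<in> {z. s a z \<in> ?T}" using subspace_0[OF Tsub] by simp
  next
    fix x y assume "x \<in> {z. s a z \<in> ?T}" "y \<in> {z. s a z \<in> ?T}"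
    then show "x + y \<in> {z. s a z \<in> ?T}" using subspace_add[OF Tsub] by (simp add: scale_right_distrib)
  next
    fix c x assume "x \<in> {z. s a z \<in> ?T}"
    then have "s c (s a x) \<in> ?T" using subspace_scale[OF Tsub] by blast
    moreover have eq: "s a (s c x) = s c (s a x)" by (rule scale_left_commute)
    ultimately show "s c x \<in> {z. s a z \<in> ?T}" by (simp only: mem_Collect_eq)
  qed
  moreover have "{s c x | c x. c \<in> ideal_pow I n \<and> x \<in> L} \<subseteq> {z. s a z \<in> ?T}"
  proof
    fix y assume "y \<in> {s c x | c x. c \<in> ideal_pow I n \<and> x \<in> L}"
    then obtain c x where cx: "y = s c x" "c \<in> ideal_pow I n" "x \<in> L" by blast
    have "a * c \<in> ideal_pow I (Suc n)"
      using module.span_base[OF mult_module, of "a * c" "{a * b | a b. a \<in> I \<and> b \<in> ideal_pow I n}"] a cx(2)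
      by auto
    then have "s (a * c) x \<in> {s c x | c x. c \<in> ideal_pow I (Suc n) \<and> x \<in> L}" using cx(3) by blast
    then have "s (a * c) x \<in> ?T" unfolding ipow_mod_def ideal_smult_def by (rule span_base)
    then show "y \<in> {z. s a z \<in> ?T}" using cx(1) by simp
  qed
  ultimately have "ipow_mod s I n L \<subseteq> {z. s a z \<in> ?T}"
    unfolding ipow_mod_def ideal_smult_def by (intro span_minimal)
  then show ?thesis using z by blast
qed

lemma sub_scale_pred:
  assumes ms: "module s" and Q: "module.subspace s Q"
  shows "module.subspace (*) {c. s c y \<in> Q}"
proof -
  interpret module s by fact
  show ?thesis unfolding module.subspace_def[OF mult_module]
    using subspace_0[OF Q] subspace_add[OF Q] subspace_scale[OF Q]
    by (simp add: scale_left_distrib flip: scale_scale)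
qed

lemma sub_mult_pred:
  assumes Q: "module.subspace (*) Q"
  shows "module.subspace (*) {a. a * (b::'r::comm_ring_1) \<in> Q}"
  using Q unfolding module.subspace_def[OF mult_module]
  by (simp add: distrib_right mult.assoc)

lemma pow_mult:
  assumes ms: "module s"
  shows "c \<in> ideal_pow I i \<Longrightarrow> x \<in> ipow_mod s I j UNIV \<Longrightarrow> s c x \<in> ipow_mod s I (i + j) UNIV"
proof (induction i arbitrary: c x)
  case 0
  then show ?case using module.subspace_scale[OF ms ipow_subspace[OF ms]] by simp
next
  case (Suc i)
  let ?Q = "{c. \<forall>x \<in> ipow_mod s I j UNIV. s c x \<in> ipow_mod s I (Suc i + j) UNIV}"
  have Qsub: "module.subspace (*) ?Q"
  proof -
    have "?Q = (\<Inter>x \<in> ipow_mod s I j UNIV. {c. s c x \<in> ipow_mod s I (Suc i + j) UNIV})" by auto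
    then show ?thesis using sub_scale_pred[OF ms ipow_subspace[OF ms]]
      by (simp add: module.subspace_Int[OF mult_module])
  qed
  have "{a * b | a b. a \<in> I \<and> b \<in> ideal_pow I i} \<subseteq> ?Q"
  proof
    fix y assume "y \<in> {a * b | a b. a \<in> I \<and> b \<in> ideal_pow I i}"
    then obtain a b where ab: "y = a * b" "a \<in> I" "b \<in> ideal_pow I i" by blast
    show "y \<in> ?Q"
    proof (intro CollectI ballI)
      fix x assume "x \<in> ipow_mod s I j UNIV"
      then have "s b x \<in> ipow_mod s I (i + j) UNIV" using Suc.IH ab(3) by blast
      then have "s a (s b x) \<in> ipow_mod s I (Suc (i + j)) UNIV" by (rule pow_step[OF ms ab(2)])
      then show "s y x \<in> ipow_mod s I (Suc i + j) UNIV" using ab(1) module.scale_scale[OF ms] by simp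
    qed
  qed
  then have "ideal_pow I (Suc i) \<subseteq> ?Q" using module.span_minimal[OF mult_module _ Qsub] by simp
  then show ?case using Suc.prems by blast
qed

lemma pow_Suc_sub:
  assumes ms: "module s"
  shows "ipow_mod s I (Suc p) UNIV \<subseteq> ipow_mod s I p UNIV"
proof -
  interpret module s by fact
  have "{s c x | c x. c \<in> ideal_pow I (Suc p) \<and> x \<in> (UNIV::'b set)} \<subseteq> ipow_mod s I p UNIV"
  proof
    fix y assume "y \<in> {s c x | c x. c \<in> ideal_pow I (Suc p) \<and> x \<in> (UNIV::'b set)}"
    then obtain c x where cx: "y = s c x" "c \<in> ideal_pow I (Suc p)" by blast
    have "{a * b | a b. a \<in> I \<and> b \<in> ideal_pow I p} \<subseteq> {c. s c x \<in> ipow_mod s I p UNIV}"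
    proof
      fix z assume "z \<in> {a * b | a b. a \<in> I \<and> b \<in> ideal_pow I p}"
      then obtain a b where ab: "z = a * b" "a \<in> I" "b \<in> ideal_pow I p" by blast
      have "s b (s a x) \<in> {s c x | c x. c \<in> ideal_pow I p \<and> x \<in> (UNIV::'b set)}" using ab(3) by blast
      then have "s b (s a x) \<in> ipow_mod s I p UNIV" unfolding ipow_mod_def ideal_smult_def by (rule span_base)
      then show "z \<in> {c. s c x \<in> ipow_mod s I p UNIV}" using ab(1) by (simp add: mult.commute)
    qed
    then have "ideal_pow I (Suc p) \<subseteq> {c. s c x \<in> ipow_mod s I p UNIV}"
      using module.span_minimal[OF mult_module _ sub_scale_pred[OF ms ipow_subspace[OF ms]]] by simp
    then show "y \<in> ipow_mod s I p UNIV" using cx by blast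
  qed
  then show ?thesis unfolding ipow_mod_def[of s I "Suc p"] ideal_smult_def
    by (intro span_minimal) (simp_all add: ipow_subspace[OF ms])
qed

section \<open>Rees module\<close>

definition liftm :: "('r \<Rightarrow> 'n::ab_group_add \<Rightarrow> 'n) \<Rightarrow> 'r \<Rightarrow> (nat \<Rightarrow> 'n) \<Rightarrow> (nat \<Rightarrow> 'n)" where
  "liftm s r g = (\<lambda>n. s r (g n))"

definition Tm :: "('r \<Rightarrow> 'n::ab_group_add \<Rightarrow> 'n) \<Rightarrow> 'r \<Rightarrow> (nat \<Rightarrow> 'n) \<Rightarrow> (nat \<Rightarrow> 'n)" where
  "Tm s a g = (\<lambda>n. case n of 0 \<Rightarrow> 0 | Suc k \<Rightarrow> s a (g k))"

definition delta :: "nat \<Rightarrow> 'n::ab_group_add \<Rightarrow> nat \<Rightarrow> 'n" where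
  "delta k x = (\<lambda>n. if n = k then x else 0)"

fun OL :: "('r \<Rightarrow> 'n::ab_group_add \<Rightarrow> 'n) \<Rightarrow> 'r list \<Rightarrow> ((nat \<Rightarrow> 'n) \<Rightarrow> (nat \<Rightarrow> 'n)) set" where
  "OL s [] = range (liftm s)"
| "OL s (a # as) = insert (Tm s a) (OL s as)"

lemma OL_set: "OL s as = range (liftm s) \<union> Tm s ` set as"
  by (induction as) auto

context module
begin

lemma liftm_add: "liftm scale r (x + y) = liftm scale r x + liftm scale r y"
  by (rule ext) (simp add: liftm_def scale_right_distrib)

lemma Tm_add: "Tm scale a (x + y) = Tm scale a x + Tm scale a y"
  by (rule ext) (simp add: Tm_def scale_right_distrib split: nat.split)

lemma liftm_Tm: "liftm scale r (Tm scale a x) = Tm scale a (liftm scale r x)"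
  by (rule ext) (simp add: Tm_def liftm_def mult.commute split: nat.split)

lemma Tm_Tm: "Tm scale b (Tm scale a x) = Tm scale a (Tm scale b x)"
  by (rule ext) (simp add: Tm_def mult.commute split: nat.split)

lemma OL_add: "g \<in> OL scale as \<Longrightarrow> g (x + y) = g x + g y"
  unfolding OL_set using liftm_add Tm_add by auto

lemma OL_comm: "g \<in> OL scale as \<Longrightarrow> g (Tm scale a x) = Tm scale a (g x)"
  unfolding OL_set using liftm_Tm Tm_Tm by auto

lemma delta_add: "delta k (x + y) = delta k x + delta k y"
  by (rule ext) (simp add: delta_def)

lemma delta_0: "delta k 0 = 0"
  by (rule ext) (simp add: delta_def)

lemma delta_neg: "delta k (- x) = - delta k x"
  by (rule ext) (simp add: delta_def)

lemma liftm_delta: "liftm scale r (delta k x) = delta k (scale r x)"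
  by (rule ext) (simp add: delta_def liftm_def)

lemma Tm_delta: "Tm scale a (delta k x) = delta (Suc k) (scale a x)"
  by (rule ext) (simp add: delta_def Tm_def split: nat.split)

lemma H0_osub: "osub (range (liftm scale)) (range (delta 0))"
  unfolding osub_def
proof (intro conjI ballI)
  have "(0 :: nat \<Rightarrow> 'b) = delta 0 0" by (rule delta_0[symmetric])
  then show "(0 :: nat \<Rightarrow> 'b) \<in> range (delta 0)" by (rule image_eqI) simp
next
  fix x y :: "nat \<Rightarrow> 'b" assume "x \<in> range (delta 0)" "y \<in> range (delta 0)"
  then obtain a b where ab: "x = delta 0 a" "y = delta 0 b" by blast
  have "x + y = delta 0 (a + b)" unfolding ab delta_add ..
  then show "x + y \<in> range (delta 0)" by (rule image_eqI) simp
next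
  fix x :: "nat \<Rightarrow> 'b" assume "x \<in> range (delta 0)"
  then obtain a where ab: "x = delta 0 a" by blast
  have "- x = delta 0 (- a)" unfolding ab delta_neg ..
  then show "- x \<in> range (delta 0)" by (rule image_eqI) simp
next
  fix g and x :: "nat \<Rightarrow> 'b" assume "g \<in> range (liftm scale)" "x \<in> range (delta 0)"
  then obtain a r where ab: "x = delta 0 a" "g = liftm scale r" by blast
  have "g x = delta 0 (scale r a)" unfolding ab liftm_delta ..
  then show "g x \<in> range (delta 0)" by (rule image_eqI) simp
qed

lemma H0_noeth:
  assumes N: "onoeth (range scale) UNIV"
  shows "onoeth (range (liftm scale)) (range (delta 0))"
  unfolding onoeth_def
proof (intro allI impI, elim conjE)
  fix U assume Us: "osub (range (liftm scale)) U" and UH: "U \<subseteq> range (delta 0)"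
  define U' where "U' = {x. delta 0 x \<in> U}"
  have "osub (range scale) U'" unfolding osub_def U'_def
  proof (intro conjI ballI)
    show "0 \<in> {x. delta 0 x \<in> U}" using osub_0[OF Us] by (simp add: delta_0)
  next
    fix x y assume "x \<in> {x. delta 0 x \<in> U}" "y \<in> {x. delta 0 x \<in> U}"
    then show "x + y \<in> {x. delta 0 x \<in> U}" using osub_add[OF Us] by (simp add: delta_add)
  next
    fix x assume "x \<in> {x. delta 0 x \<in> U}"
    then show "- x \<in> {x. delta 0 x \<in> U}" using osub_neg[OF Us] by (simp add: delta_neg)
  next
    fix g x assume "g \<in> range scale" "x \<in> {x. delta 0 x \<in> U}"
    then obtain r where "g = scale r" by blast
    then show "g x \<in> {x. delta 0 x \<in> U}" using osub_op[OF Us, of "liftm scale r" "delta 0 x"] \<open>x \<in> _\<close>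
      by (simp add: liftm_delta)
  qed
  then obtain W' where W': "finite W'" "ospan (range scale) W' = U'" using N unfolding onoeth_def by blast
  have "ospan (range (liftm scale)) (delta 0 ` W') = U"
  proof
    show "ospan (range (liftm scale)) (delta 0 ` W') \<subseteq> U"
    proof (rule ospan_least[OF _ Us])
      show "delta 0 ` W' \<subseteq> U"
      proof
        fix y assume "y \<in> delta 0 ` W'"
        then obtain w where w: "w \<in> W'" "y = delta 0 w" by blast
        have "w \<in> U'" using ospan.os_base[OF w(1), of "range scale"] unfolding W'(2) .
        then show "y \<in> U" unfolding w(2) U'_def by simp
      qed
    qed
    show "U \<subseteq> ospan (range (liftm scale)) (delta 0 ` W')"
    proof
      fix u assume uU: "u \<in> U"
      then obtain x where x: "u = delta 0 x" using UH by blast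
      from uU have "delta 0 x \<in> U" unfolding x .
      then have "x \<in> U'" unfolding U'_def by (rule CollectI)
      then have "x \<in> ospan (range scale) W'" unfolding W'(2) .
      then have "delta 0 x \<in> ospan (range (liftm scale)) (delta 0 ` W')"
      proof (induction rule: ospan.induct)
        case (os_base x)
        show ?case by (rule ospan.os_base, rule imageI, fact)
      next
        case os_zero
        show ?case unfolding delta_0 by (rule ospan.os_zero)
      next
        case (os_add x y)
        show ?case unfolding delta_add by (rule ospan.os_add[OF os_add.IH])
      next
        case (os_neg x)
        show ?case unfolding delta_neg by (rule ospan.os_neg[OF os_neg.IH])
      next
        case (os_op g x)
        from os_op(1) obtain r where g: "g = scale r" by (rule rangeE)
        have "liftm scale r (delta 0 x) \<in> ospan (range (liftm scale)) (delta 0 ` W')"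
          by (rule ospan.os_op[OF rangeI os_op.IH])
        then show ?case unfolding g liftm_delta .
      qed
      then show "u \<in> ospan (range (liftm scale)) (delta 0 ` W')" unfolding x .
    qed
  qed
  then show "\<exists>W. finite W \<and> ospan (range (liftm scale)) W = U" using W'(1) by blast
qed

definition RN :: "'a list \<Rightarrow> (nat \<Rightarrow> 'b) set" where
  "RN as = ospan (OL scale as) (range (delta 0))"

lemma RN_osub: "osub (OL scale as) (RN as)"
  unfolding RN_def by (rule ospan_osub)

lemma RN_noeth:
  assumes N: "onoeth (range scale) UNIV"
  shows "onoeth (OL scale as) (RN as)"
proof (induction as)
  case Nil
  have "RN [] = range (delta 0)" unfolding RN_def using ospan_idem[OF H0_osub] by simp
  then show ?case using H0_noeth[OF N] by simp
next
  case (Cons a as)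
  interpret h: hilb "OL scale as" "Tm scale a" "RN as"
  proof unfold_locales
    show "g (x + y) = g x + g y" if "g \<in> OL scale as" for g x y using that by (rule OL_add)
    show "Tm scale a (x + y) = Tm scale a x + Tm scale a y" for x y by (rule Tm_add)
    show "g (Tm scale a x) = Tm scale a (g x)" if "g \<in> OL scale as" for g x using that by (rule OL_comm)
    show "osub (OL scale as) (RN as)" by (rule RN_osub)
  qed
  have "onoeth (insert (Tm scale a) (OL scale as)) (ospan (insert (Tm scale a) (OL scale as)) (RN as))"
    by (rule h.hilbert[OF Cons.IH])
  moreover have "ospan (insert (Tm scale a) (OL scale as)) (RN as) = RN (a # as)"
    unfolding RN_def by (simp add: ospan_trans subset_insertI)
  ultimately show ?case by simp
qed

lemma osub_OL_intro:
  assumes "0 \<in> Y" "\<And>x y. x \<in> Y \<Longrightarrow> y \<in> Y \<Longrightarrow> x + y \<in> Y" "\<And>x. x \<in> Y \<Longrightarrow> - x \<in> Y"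
    "\<And>r x. x \<in> Y \<Longrightarrow> liftm scale r x \<in> Y"
    "\<And>a x. a \<in> set as \<Longrightarrow> x \<in> Y \<Longrightarrow> Tm scale a x \<in> Y"
  shows "osub (OL scale as) Y"
  unfolding osub_def OL_set using assms by blast

lemma osub_Int: "osub Ops A \<Longrightarrow> osub Ops B \<Longrightarrow> osub Ops (A \<inter> B)"
  unfolding osub_def by blast

lemma liftm_OL: "liftm scale r \<in> OL scale as"
  unfolding OL_set by blast

lemma Tm_OL: "a \<in> set as \<Longrightarrow> Tm scale a \<in> OL scale as"
  unfolding OL_set by blast

lemma RN_fsupp:
  assumes "g \<in> RN as" shows "\<exists>K. \<forall>n>K. g n = 0"
proof -
  let ?Y = "{g :: nat \<Rightarrow> 'b. \<exists>K. \<forall>n>K. g n = 0}"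
  have "osub (OL scale as) ?Y"
  proof (rule osub_OL_intro)
    show "(0 :: nat \<Rightarrow> 'b) \<in> ?Y" by simp
  next
    fix x y :: "nat \<Rightarrow> 'b" assume "x \<in> ?Y" "y \<in> ?Y"
    then obtain K1 K2 where "\<forall>n>K1. x n = 0" "\<forall>n>K2. y n = 0" by blast
    then have "\<forall>n>max K1 K2. (x + y) n = 0" by simp
    then show "x + y \<in> ?Y" by blast
  next
    fix x :: "nat \<Rightarrow> 'b" assume "x \<in> ?Y"
    then obtain K1 where "\<forall>n>K1. x n = 0" by blast
    then have "\<forall>n>K1. (- x) n = 0" by simp
    then show "- x \<in> ?Y" by blast
  next
    fix r and x :: "nat \<Rightarrow> 'b" assume "x \<in> ?Y"
    then obtain K1 where "\<forall>n>K1. x n = 0" by blast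
    then have "\<forall>n>K1. liftm scale r x n = 0" by (simp add: liftm_def)
    then show "liftm scale r x \<in> ?Y" by blast
  next
    fix a and x :: "nat \<Rightarrow> 'b" assume "x \<in> ?Y"
    then obtain K1 where K1: "\<forall>n>K1. x n = 0" by blast
    have "\<forall>n>Suc K1. Tm scale a x n = 0"
    proof (intro allI impI)
      fix n assume "Suc K1 < n"
      then obtain j where "n = Suc j" "K1 < j" by (cases n) auto
      then show "Tm scale a x n = 0" using K1 by (simp add: Tm_def)
    qed
    then show "Tm scale a x \<in> ?Y" by blast
  qed
  moreover have "range (delta 0) \<subseteq> ?Y"
  proof
    fix y :: "nat \<Rightarrow> 'b" assume "y \<in> range (delta 0)"
    then obtain x where "y = delta 0 x" by blast
    then have "\<forall>n>0. y n = 0" by (simp add: delta_def)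
    then show "y \<in> ?Y" by blast
  qed
  ultimately have "RN as \<subseteq> ?Y" unfolding RN_def by (intro ospan_least)
  then show ?thesis using assms by blast
qed

lemma RN_pow:
  assumes I: "set as \<subseteq> I" and g: "g \<in> RN as"
  shows "g n \<in> ipow_mod scale I n UNIV"
proof -
  have ms: "module scale" by unfold_locales
  let ?Y = "{g :: nat \<Rightarrow> 'b. \<forall>n. g n \<in> ipow_mod scale I n UNIV}"
  have sub: "subspace (ipow_mod scale I n UNIV)" for n using ipow_subspace[OF ms] .
  have "osub (OL scale as) ?Y"
  proof (rule osub_OL_intro)
    show "(0 :: nat \<Rightarrow> 'b) \<in> ?Y" using subspace_0[OF sub] by simp
  next
    fix x y :: "nat \<Rightarrow> 'b" assume "x \<in> ?Y" "y \<in> ?Y"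
    then show "x + y \<in> ?Y" using subspace_add[OF sub] by simp
  next
    fix x :: "nat \<Rightarrow> 'b" assume "x \<in> ?Y"
    then show "- x \<in> ?Y" using subspace_neg[OF sub] by simp
  next
    fix r and x :: "nat \<Rightarrow> 'b" assume "x \<in> ?Y"
    then show "liftm scale r x \<in> ?Y" using subspace_scale[OF sub] by (simp add: liftm_def)
  next
    fix a and x :: "nat \<Rightarrow> 'b" assume a: "a \<in> set as" and x: "x \<in> ?Y"
    show "Tm scale a x \<in> ?Y"
    proof (intro CollectI allI)
      fix n show "Tm scale a x n \<in> ipow_mod scale I n UNIV"
      proof (cases n)
        case 0
        then show ?thesis using subspace_0[OF sub] by (simp add: Tm_def)
      next
        case (Suc j)
        have "scale a (x j) \<in> ipow_mod scale I (Suc j) UNIV"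
          using pow_step[OF ms _ ] a I x by blast
        then show ?thesis using Suc by (simp add: Tm_def)
      qed
    qed
  qed
  moreover have "range (delta 0) \<subseteq> ?Y"
  proof
    fix y :: "nat \<Rightarrow> 'b" assume "y \<in> range (delta 0)"
    then obtain x where y: "y = delta 0 x" by blast
    show "y \<in> ?Y"
    proof (intro CollectI allI)
      fix n show "y n \<in> ipow_mod scale I n UNIV"
        using ipow0[OF ms, of x UNIV I] subspace_0[OF sub, of n] unfolding y delta_def by auto
    qed
  qed
  ultimately have "RN as \<subseteq> ?Y" unfolding RN_def by (intro ospan_least)
  then show ?thesis using g by blast
qed

lemma delta_RN:
  assumes I: "I = module.span (*) (set as)"
  shows "x \<in> ipow_mod scale I n UNIV \<Longrightarrow> delta n x \<in> RN as"
proof (induction n arbitrary: x)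
  have ms: "module scale" by unfold_locales
  case 0
  show ?case unfolding RN_def by (rule ospan.os_base) simp
next
  have ms: "module scale" by unfold_locales
  case (Suc n)
  let ?Q = "{x. delta (Suc n) x \<in> RN as}"
  have Qsub: "subspace ?Q" unfolding subspace_def
  proof (intro conjI ballI allI)
    show "0 \<in> ?Q" unfolding mem_Collect_eq delta_0 by (rule osub_0[OF RN_osub])
  next
    fix x y assume "x \<in> ?Q" "y \<in> ?Q"
    then show "x + y \<in> ?Q" unfolding mem_Collect_eq delta_add by (rule osub_add[OF RN_osub])
  next
    fix c x assume "x \<in> ?Q"
    then have "liftm scale c (delta (Suc n) x) \<in> RN as"
      by (intro osub_op[OF RN_osub liftm_OL]) simp
    then show "scale c x \<in> ?Q" unfolding liftm_delta by simp
  qed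
  have gen: "{scale c y | c y. c \<in> ideal_pow I (Suc n) \<and> y \<in> (UNIV :: 'b set)} \<subseteq> ?Q"
  proof
    fix z assume "z \<in> {scale c y | c y. c \<in> ideal_pow I (Suc n) \<and> y \<in> (UNIV :: 'b set)}"
    then obtain c y where z: "z = scale c y" "c \<in> ideal_pow I (Suc n)" by blast
    let ?P = "{c. scale c y \<in> ?Q}"
    have Psub: "module.subspace (*) ?P" by (rule sub_scale_pred[OF ms Qsub])
    have "{a * b | a b. a \<in> I \<and> b \<in> ideal_pow I n} \<subseteq> ?P"
    proof
      fix w assume "w \<in> {a * b | a b. a \<in> I \<and> b \<in> ideal_pow I n}"
      then obtain a b where w: "w = a * b" "a \<in> I" "b \<in> ideal_pow I n" by blast
      have "set as \<subseteq> {a. a * b \<in> ?P}"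
      proof
        fix a' assume a': "a' \<in> set as"
        have "scale b y \<in> {scale c x | c x. c \<in> ideal_pow I n \<and> x \<in> (UNIV :: 'b set)}" using w(3) by blast
        then have "scale b y \<in> ipow_mod scale I n UNIV" unfolding ipow_mod_def ideal_smult_def by (rule span_base)
        then have "delta n (scale b y) \<in> RN as" by (rule Suc.IH)
        then have "Tm scale a' (delta n (scale b y)) \<in> RN as" by (rule osub_op[OF RN_osub Tm_OL[OF a']])
        then have "delta (Suc n) (scale (a' * b) y) \<in> RN as" unfolding Tm_delta by simp
        then show "a' \<in> {a. a * b \<in> ?P}" by simp
      qed
      then have "module.span (*) (set as) \<subseteq> {a. a * b \<in> ?P}"
        by (rule module.span_minimal[OF mult_module _ sub_mult_pred[OF Psub]])
      then show "w \<in> ?P" using w(1,2) I by blast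
    qed
    then have "ideal_pow I (Suc n) \<subseteq> ?P"
      using module.span_minimal[OF mult_module _ Psub] by simp
    then show "z \<in> ?Q" using z by blast
  qed
  have "ipow_mod scale I (Suc n) UNIV \<subseteq> ?Q"
    unfolding ipow_mod_def[of scale I "Suc n"] ideal_smult_def by (rule span_minimal[OF gen Qsub])
  then show ?case using Suc.prems by blast
qed

lemma V_osub:
  assumes N': "subspace N'"
  shows "osub (OL scale as) {g \<in> RN as. \<forall>n. g n \<in> N'}"
proof -
  let ?Y = "{g :: nat \<Rightarrow> 'b. \<forall>n. g n \<in> N'}"
  have "osub (OL scale as) ?Y"
  proof (rule osub_OL_intro)
    show "(0 :: nat \<Rightarrow> 'b) \<in> ?Y" using subspace_0[OF N'] by simp
  next
    fix x y :: "nat \<Rightarrow> 'b" assume "x \<in> ?Y" "y \<in> ?Y"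
    then show "x + y \<in> ?Y" using subspace_add[OF N'] by simp
  next
    fix x :: "nat \<Rightarrow> 'b" assume "x \<in> ?Y"
    then show "- x \<in> ?Y" using subspace_neg[OF N'] by simp
  next
    fix r and x :: "nat \<Rightarrow> 'b" assume "x \<in> ?Y"
    then show "liftm scale r x \<in> ?Y" using subspace_scale[OF N'] by (simp add: liftm_def)
  next
    fix a and x :: "nat \<Rightarrow> 'b" assume x: "x \<in> ?Y"
    show "Tm scale a x \<in> ?Y"
    proof (intro CollectI allI)
      fix n show "Tm scale a x n \<in> N'"
        using subspace_0[OF N'] subspace_scale[OF N'] x by (simp add: Tm_def split: nat.split)
    qed
  qed
  moreover have "{g \<in> RN as. \<forall>n. g n \<in> N'} = RN as \<inter> ?Y" by blast
  ultimately show ?thesis using osub_Int[OF RN_osub] by simp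
qed

lemma AR_exists:
  assumes N: "onoeth (range scale) UNIV" and I: "I = module.span (*) (set as)" and N': "subspace N'"
  shows "\<exists>k. \<forall>n\<ge>k. ipow_mod scale I n UNIV \<inter> N' = ipow_mod scale I (n - k) (ipow_mod scale I k UNIV \<inter> N')"
proof -
  have ms: "module scale" by unfold_locales
  have asI: "set as \<subseteq> I" unfolding I using module.span_superset[OF mult_module] .
  define V where "V = {g \<in> RN as. \<forall>n. g n \<in> N'}"
  have Vs: "osub (OL scale as) V" unfolding V_def by (rule V_osub[OF N'])
  have VR: "V \<subseteq> RN as" unfolding V_def by blast
  obtain W where W: "finite W" "ospan (OL scale as) W = V"
    using RN_noeth[OF N, of as] Vs VR unfolding onoeth_def by blast
  have WV: "W \<subseteq> V" using W(2) ospan.os_base[of _ W "OL scale as"] by blast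
  have "\<forall>w\<in>W. \<exists>K. \<forall>n>K. w n = 0" using WV VR RN_fsupp by blast
  then obtain KK where KK: "\<And>w n. w \<in> W \<Longrightarrow> n > KK w \<Longrightarrow> w n = 0" by metis
  define k where "k = (\<Sum>w\<in>W. KK w)"
  have Wk: "w n = 0" if "w \<in> W" "n > k" for w n
  proof -
    have "KK w \<le> k" unfolding k_def using W(1) that(1) by (simp add: member_le_sum)
    then show ?thesis using KK[OF that(1)] that(2) by simp
  qed
  define Z where "Z j = ipow_mod scale I j (ipow_mod scale I k UNIV \<inter> N')" for j
  have Zsub: "subspace (Z j)" for j unfolding Z_def by (rule ipow_subspace[OF ms])
  have Z0: "x \<in> ipow_mod scale I k UNIV \<Longrightarrow> x \<in> N' \<Longrightarrow> x \<in> Z 0" for x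
    unfolding Z_def by (rule ipow0[OF ms]) simp
  define Y where "Y = {g \<in> V. \<forall>n\<ge>k. g n \<in> Z (n - k)}"
  have Ys: "osub (OL scale as) Y"
  proof (rule osub_OL_intro)
    show "0 \<in> Y" unfolding Y_def using osub_0[OF Vs] subspace_0[OF Zsub] by simp
  next
    fix x y assume "x \<in> Y" "y \<in> Y"
    then show "x + y \<in> Y" unfolding Y_def using osub_add[OF Vs] subspace_add[OF Zsub] by simp
  next
    fix x assume "x \<in> Y"
    then show "- x \<in> Y" unfolding Y_def using osub_neg[OF Vs] subspace_neg[OF Zsub] by simp
  next
    fix r x assume "x \<in> Y"
    then show "liftm scale r x \<in> Y" unfolding Y_def
      using osub_op[OF Vs liftm_OL] subspace_scale[OF Zsub] by (simp add: liftm_def)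
  next
    fix a x assume a: "a \<in> set as" and x: "x \<in> Y"
    have xV: "x \<in> V" using x unfolding Y_def by simp
    have TV: "Tm scale a x \<in> V" by (rule osub_op[OF Vs Tm_OL[OF a] xV])
    have "Tm scale a x n \<in> Z (n - k)" if n: "n \<ge> k" for n
    proof (cases n)
      case 0
      then show ?thesis using subspace_0[OF Zsub] by (simp add: Tm_def)
    next
      case (Suc j)
      show ?thesis
      proof (cases "k \<le> j")
        case True
        then have "x j \<in> Z (j - k)" using x unfolding Y_def by simp
        then have "scale a (x j) \<in> Z (Suc (j - k))" unfolding Z_def
          by (rule pow_step[OF ms asI[THEN subsetD, OF a]])
        moreover have "Suc (j - k) = n - k" using True Suc by simp
        ultimately show ?thesis using Suc by (simp add: Tm_def)
      next
        case False
        then have nk: "n = k" using n Suc by simp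
        have "Tm scale a x n \<in> ipow_mod scale I n UNIV" by (rule RN_pow[OF asI]) (use TV VR in blast)
        moreover have "Tm scale a x n \<in> N'" using TV unfolding V_def by blast
        ultimately show ?thesis using Z0 nk by simp
      qed
    qed
    then show "Tm scale a x \<in> Y" unfolding Y_def using TV by blast
  qed
  have "W \<subseteq> Y"
  proof
    fix w assume w: "w \<in> W"
    have wV: "w \<in> V" using w WV by blast
    have "w n \<in> Z (n - k)" if "n \<ge> k" for n
    proof (cases "n = k")
      case True
      have "w n \<in> ipow_mod scale I n UNIV" by (rule RN_pow[OF asI]) (use wV VR in blast)
      moreover have "w n \<in> N'" using wV unfolding V_def by blast
      ultimately show ?thesis using Z0 True by simp
    next
      case False
      then have "w n = 0" using Wk[OF w] that by simp
      then show ?thesis using subspace_0[OF Zsub] by simp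
    qed
    then show "w \<in> Y" unfolding Y_def using wV by blast
  qed
  then have VY: "V \<subseteq> Y" using ospan_least[OF _ Ys] W(2) by blast
  have "ipow_mod scale I n UNIV \<inter> N' = Z (n - k)" if nk: "n \<ge> k" for n
  proof
    show "ipow_mod scale I n UNIV \<inter> N' \<subseteq> Z (n - k)"
    proof
      fix y assume y: "y \<in> ipow_mod scale I n UNIV \<inter> N'"
      have "delta n y \<in> RN as" using delta_RN[OF I] y by blast
      moreover have "\<forall>i. delta n y i \<in> N'" using y subspace_0[OF N'] by (simp add: delta_def)
      ultimately have "delta n y \<in> Y" using VY unfolding V_def by blast
      then have "delta n y n \<in> Z (n - k)" using nk unfolding Y_def by blast
      then show "y \<in> Z (n - k)" by (simp add: delta_def)
    qed
    show "Z (n - k) \<subseteq> ipow_mod scale I n UNIV \<inter> N'"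
      unfolding Z_def ipow_mod_def[of scale I "n - k"] ideal_smult_def
    proof (rule span_minimal)
      show "subspace (ipow_mod scale I n UNIV \<inter> N')"
        by (rule subspace_inter[OF ipow_subspace[OF ms] N'])
      show "{scale a x |a x. a \<in> ideal_pow I (n - k) \<and> x \<in> ipow_mod scale I k UNIV \<inter> N'}
          \<subseteq> ipow_mod scale I n UNIV \<inter> N'"
      proof
        fix z assume "z \<in> {scale a x |a x. a \<in> ideal_pow I (n - k) \<and> x \<in> ipow_mod scale I k UNIV \<inter> N'}"
        then obtain c x where z: "z = scale c x" "c \<in> ideal_pow I (n - k)" "x \<in> ipow_mod scale I k UNIV" "x \<in> N'"
          by blast
        have "scale c x \<in> ipow_mod scale I (n - k + k) UNIV" by (rule pow_mult[OF ms z(2) z(3)])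
        moreover have "scale c x \<in> N'" using subspace_scale[OF N' z(4)] .
        ultimately show "z \<in> ipow_mod scale I n UNIV \<inter> N'" using z(1) nk by simp
      qed
    qed
  qed
  then show ?thesis unfolding Z_def by blast
qed

end



lemma AR_prop:
  fixes s :: "'r::comm_ring_1 \<Rightarrow> 'n::ab_group_add \<Rightarrow> 'n"
  assumes R: "noetherian_ring TYPE('r)" and m: "ring_ideal m" and ms: "module s"
    and fg: "fin_gen_module s" and N': "module.subspace s N'"
  shows "\<forall>n\<ge>AR_number s m N'. ipow_mod s m n UNIV \<inter> N' =
           ipow_mod s m (n - AR_number s m N') (ipow_mod s m (AR_number s m N') UNIV \<inter> N')"
proof -
  obtain S where S: "finite S" "module.span (*) S = m" using R m unfolding noetherian_ring_def by blast
  obtain as where as: "set as = S" using finite_list[OF S(1)] by blast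
  have "\<exists>k. \<forall>n\<ge>k. ipow_mod s m n UNIV \<inter> N' = ipow_mod s m (n - k) (ipow_mod s m k UNIV \<inter> N')"
  proof (rule module.AR_exists[OF ms noeth_N[OF ms R fg], where as = as])
    show "m = module.span (*) (set as)" using S(2) as by simp
  qed (rule N')
  then show ?thesis unfolding AR_number_def by (rule LeastI_ex)
qed

lemma set_sum_subspace:
  assumes ms: "module s" and A: "module.subspace s A" and B: "module.subspace s B"
  shows "module.subspace s (set_sum A B)"
proof -
  interpret module s by fact
  show ?thesis unfolding subspace_def set_sum_def
  proof (intro conjI ballI allI)
    show "0 \<in> {a + b |a b. a \<in> A \<and> b \<in> B}" using subspace_0[OF A] subspace_0[OF B] by force
  next
    fix x y assume "x \<in> {a + b |a b. a \<in> A \<and> b \<in> B}" "y \<in> {a + b |a b. a \<in> A \<and> b \<in> B}"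
    then obtain a1 b1 a2 b2 where e: "x = a1 + b1" "y = a2 + b2" "a1 \<in> A" "b1 \<in> B" "a2 \<in> A" "b2 \<in> B" by blast
    have "x + y = (a1 + a2) + (b1 + b2)" using e by (simp add: algebra_simps)
    then show "x + y \<in> {a + b |a b. a \<in> A \<and> b \<in> B}"
      using subspace_add[OF A e(3,5)] subspace_add[OF B e(4,6)] by blast
  next
    fix c x assume "x \<in> {a + b |a b. a \<in> A \<and> b \<in> B}"
    then obtain a1 b1 where e: "x = a1 + b1" "a1 \<in> A" "b1 \<in> B" by blast
    have "s c x = s c a1 + s c b1" using e by (simp add: scale_right_distrib)
    then show "s c x \<in> {a + b |a b. a \<in> A \<and> b \<in> B}"
      using subspace_scale[OF A e(2)] subspace_scale[OF B e(3)] by blast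
  qed
qed

lemma eps_pow:
  assumes h: "module_hom sM sN \<epsilon>" and eps: "range \<epsilon> \<subseteq> ipow_mod sN m d UNIV"
    and x: "x \<in> ipow_mod sM m p UNIV"
  shows "\<epsilon> x \<in> ipow_mod sN m (p + d) UNIV"
proof -
  interpret module_hom sM sN \<epsilon> by fact
  have msM: "module sM" and msN: "module sN" by unfold_locales
  have "{sM c y | c y. c \<in> ideal_pow m p \<and> y \<in> UNIV} \<subseteq> \<epsilon> -` ipow_mod sN m (p + d) UNIV"
  proof
    fix z assume "z \<in> {sM c y | c y. c \<in> ideal_pow m p \<and> y \<in> UNIV}"
    then obtain c y where z: "z = sM c y" "c \<in> ideal_pow m p" by blast
    have "\<epsilon> y \<in> ipow_mod sN m d UNIV" using eps by blast
    then have "sN c (\<epsilon> y) \<in> ipow_mod sN m (p + d) UNIV" by (rule pow_mult[OF msN z(2)])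
    then show "z \<in> \<epsilon> -` ipow_mod sN m (p + d) UNIV" using z(1) scale by simp
  qed
  then have "ipow_mod sM m p UNIV \<subseteq> \<epsilon> -` ipow_mod sN m (p + d) UNIV"
    unfolding ipow_mod_def[of sM] ideal_smult_def
    by (rule m1.span_minimal[OF _ subspace_vimage[OF ipow_subspace[OF msN]]])
  then show ?thesis using x by blast
qed

lemma f_lift:
  assumes h: "module_hom sM sN f" and y: "y \<in> ipow_mod sN m j (X \<inter> range f)"
  shows "\<exists>w \<in> ipow_mod sM m j UNIV. y = f w"
proof -
  interpret module_hom sM sN f by fact
  have msM: "module sM" and msN: "module sN" by unfold_locales
  have "{sN c v | c v. c \<in> ideal_pow m j \<and> v \<in> X \<inter> range f} \<subseteq> f ` ipow_mod sM m j UNIV"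
  proof
    fix z assume "z \<in> {sN c v | c v. c \<in> ideal_pow m j \<and> v \<in> X \<inter> range f}"
    then obtain c v u where z: "z = sN c v" "c \<in> ideal_pow m j" "v = f u" by blast
    have "sM c u \<in> {sM c y | c y. c \<in> ideal_pow m j \<and> y \<in> UNIV}" using z(2) by blast
    then have "sM c u \<in> ipow_mod sM m j UNIV" unfolding ipow_mod_def ideal_smult_def by (rule m1.span_base)
    moreover have "z = f (sM c u)" using z(1,3) scale by simp
    ultimately show "z \<in> f ` ipow_mod sM m j UNIV" by blast
  qed
  then have "ipow_mod sN m j (X \<inter> range f) \<subseteq> f ` ipow_mod sM m j UNIV"
    unfolding ipow_mod_def[of sN] ideal_smult_def
    by (rule m2.span_minimal[OF _ subspace_image[OF ipow_subspace[OF msM]]])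
  then show ?thesis using y by blast
qed

theorem corollary2p6:
  fixes m :: "'r::comm_ring_1 set"
    and sM :: "'r \<Rightarrow> 'm::ab_group_add \<Rightarrow> 'm"
    and sN :: "'r \<Rightarrow> 'n::ab_group_add \<Rightarrow> 'n"
    and f \<epsilon> :: "'m \<Rightarrow> 'n"
  assumes "noetherian_ring TYPE('r)"
    and "local_ring m"
    and "module sM" and "module sN"
    and "fin_gen_module sM" and "fin_gen_module sN"
    and "module_hom sM sN f"
    and "module_hom sM sN \<epsilon>"
    and "range \<epsilon> \<subseteq> ipow_mod sN m (1 + AR_number sN m (range f)) UNIV"
  shows "graded_subquotient sM m {x. f x + \<epsilon> x = 0} {x. f x = 0}"
proof -
  note R = assms(1) and msM = assms(3) and msN = assms(4) and fgN = assms(6)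
    and hf = assms(7) and he = assms(8) and eps = assms(9)
  have mid: "ring_ideal m" using assms(2) unfolding local_ring_def by blast
  interpret M: module sM by fact
  interpret N: module sN by fact
  define K where "K = AR_number sN m (range f)"
  have rf: "N.subspace (range f)" using module_hom.subspace_image[OF hf M.subspace_UNIV] by simp
  have AR: "\<forall>n\<ge>K. ipow_mod sN m n UNIV \<inter> range f = ipow_mod sN m (n - K) (ipow_mod sN m K UNIV \<inter> range f)"
    unfolding K_def by (rule AR_prop[OF R mid msN fgN rf])
  define K' where "K' = {x. f x + \<epsilon> x = 0}"
  have K'sub: "M.subspace K'" unfolding K'_def M.subspace_def
    using module_hom.add[OF hf] module_hom.add[OF he] module_hom.scale[OF hf] module_hom.scale[OF he]
      module_hom.zero[OF hf] module_hom.zero[OF he]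
    by (simp add: algebra_simps N.scale_right_distrib[symmetric])
  show ?thesis unfolding graded_subquotient_def
  proof
    fix p
    let ?B = "ipow_mod sM m (Suc p) UNIV"
    let ?A = "initial_comp sM m K' p"
    have Bsub: "M.subspace ?B" by (rule ipow_subspace[OF msM])
    have A_sub: "M.subspace ?A" unfolding initial_comp_def
      by (rule set_sum_subspace[OF msM M.subspace_inter[OF K'sub ipow_subspace[OF msM]] Bsub])
    have BA: "?B \<subseteq> ?A"
    proof
      fix z assume "z \<in> ?B"
      moreover have "0 \<in> K' \<inter> ipow_mod sM m p UNIV"
        using M.subspace_0[OF K'sub] M.subspace_0[OF ipow_subspace[OF msM]] by blast
      ultimately show "z \<in> ?A" unfolding initial_comp_def set_sum_def by force
    qed
    have AK: "?A \<subseteq> initial_comp sM m {x. f x = 0} p"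
    proof
      fix y assume "y \<in> ?A"
      then obtain x z where y: "y = x + z" "x \<in> K'" "x \<in> ipow_mod sM m p UNIV" "z \<in> ?B"
        unfolding initial_comp_def set_sum_def by blast
      have "\<epsilon> x \<in> ipow_mod sN m (p + (1 + K)) UNIV"
        by (rule eps_pow[OF he eps[folded K_def] y(3)])
      then have "- \<epsilon> x \<in> ipow_mod sN m (p + (1 + K)) UNIV" by (rule N.subspace_neg[OF ipow_subspace[OF msN]])
      moreover have "f x = - \<epsilon> x" using y(2) unfolding K'_def by (simp add: eq_neg_iff_add_eq_0)
      ultimately have "f x \<in> ipow_mod sN m (p + (1 + K)) UNIV" by simp
      then have "f x \<in> ipow_mod sN m (p + (1 + K)) UNIV \<inter> range f" by blast
      moreover have "ipow_mod sN m (p + (1 + K)) UNIV \<inter> range f = ipow_mod sN m (p + (1 + K) - K) (ipow_mod sN m K UNIV \<inter> range f)"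
        by (rule AR[rule_format]) simp
      ultimately have "f x \<in> ipow_mod sN m (p + (1 + K) - K) (ipow_mod sN m K UNIV \<inter> range f)"
        by (simp only:)
      then have "f x \<in> ipow_mod sN m (Suc p) (ipow_mod sN m K UNIV \<inter> range f)" by simp
      from f_lift[OF hf this] obtain w where w: "w \<in> ?B" "f x = f w" by (elim bexE)
      have "f (x - w) = 0" using w(2) module_hom.diff[OF hf] by simp
      moreover have "x - w \<in> ipow_mod sM m p UNIV"
        using M.subspace_diff[OF ipow_subspace[OF msM] y(3)] w(1) pow_Suc_sub[OF msM] by blast
      moreover have "w + z \<in> ?B" using M.subspace_add[OF Bsub w(1) y(4)] .
      moreover have "y = (x - w) + (w + z)" using y(1) by simp
      ultimately have "x - w \<in> {x. f x = 0} \<inter> ipow_mod sM m p UNIV" "w + z \<in> ?B" "y = (x - w) + (w + z)"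
        by simp_all
      then show "y \<in> initial_comp sM m {x. f x = 0} p"
        unfolding initial_comp_def set_sum_def mem_Collect_eq by blast
    qed
    have QI: "quot_iso sM ?A ?B ?A ?B" unfolding quot_iso_def
    proof (intro exI[of _ id] conjI ballI allI impI)
      show "bij_betw id (cosets ?A ?B) (cosets ?A ?B)" by (rule bij_betw_id)
    next
      fix x y a b assume "a \<in> id (coset x ?B)" "b \<in> id (coset y ?B)"
      then obtain q1 q2 where q: "a = x + q1" "q1 \<in> ?B" "b = y + q2" "q2 \<in> ?B"
        unfolding coset_def id_def mem_Collect_eq by blast
      have "a + b = (x + y) + (q1 + q2)" using q by (simp add: algebra_simps)
      then show "a + b \<in> id (coset (x + y) ?B)" unfolding coset_def id_def mem_Collect_eq
        using M.subspace_add[OF Bsub q(2) q(4)] by blast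
    next
      fix x r a assume "a \<in> id (coset x ?B)"
      then obtain q where q: "a = x + q" "q \<in> ?B" unfolding coset_def id_def mem_Collect_eq by blast
      have "sM r a = sM r x + sM r q" using q by (simp add: M.scale_right_distrib)
      then show "sM r a \<in> id (coset (sM r x) ?B)" unfolding coset_def id_def mem_Collect_eq
        using M.subspace_scale[OF Bsub q(2)] by blast
    qed
    show "\<exists>A B. M.subspace A \<and> M.subspace B \<and> ?B \<subseteq> B \<and> B \<subseteq> A \<and>
        A \<subseteq> initial_comp sM m {x. f x = 0} p \<and> quot_iso sM (initial_comp sM m {x. f x + \<epsilon> x = 0} p) ?B A B"
      apply (rule exI[of _ ?A], rule exI[of _ ?B])
      using A_sub Bsub BA AK QI unfolding K'_def by (intro conjI subset_refl)
  qed
qed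


end
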